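(* Let $G$ be a finite group and $p$ a prime with $\gcd(p-1,|G|)=1$. If $|G'|=p^2$ and $|G'\cap Z(G)|=p$, then $G$ is nilpotent of class $3$; in particular $G\cong P\times A$, where $A$ is an abelian group and $P$ is a $p$-group with $|P'|=p^2$ and $|P'\cap Z(P)|=p$.
   Context: $G'$ denotes the commutator subgroup and $Z(G)$ the center of $G$. *)

theory Defs
  imports "HOL-Algebra.Algebra"
begin

definition center :: "('a, 'b) monoid_scheme \<Rightarrow> 'a set" where
  "center G = {z \<in> carrier G. \<forall>x \<in> carrier G. z \<otimes>\<^bsub>G\<^esub> x = x \<otimes>\<^bsub>G\<^esub> z}"

definition comm_subgroup :: "('a, 'b) monoid_scheme \<Rightarrow> 'a set \<Rightarrow> 'a set \<Rightarrow> 'a set" where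
  "comm_subgroup G H K = generate G
     (\<Union>h \<in> H. \<Union>k \<in> K. {h \<otimes>\<^bsub>G\<^esub> k \<otimes>\<^bsub>G\<^esub> inv\<^bsub>G\<^esub> h \<otimes>\<^bsub>G\<^esub> inv\<^bsub>G\<^esub> k})"

text \<open>Lower central series, indexed from 0: gamma 0 = G, gamma (n+1) = [gamma n, G].
  (In the usual 1-based indexing this is gamma_(n+1).)\<close>
fun lower_central :: "('a, 'b) monoid_scheme \<Rightarrow> nat \<Rightarrow> 'a set" where
  "lower_central G 0 = carrier G"
| "lower_central G (Suc n) = comm_subgroup G (lower_central G n) (carrier G)"

definition nilpotent_of_class :: "('a, 'b) monoid_scheme \<Rightarrow> nat \<Rightarrow> bool" where
  "nilpotent_of_class G c \<longleftrightarrow>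
     lower_central G c = {\<one>\<^bsub>G\<^esub>} \<and> (\<forall>k < c. lower_central G k \<noteq> {\<one>\<^bsub>G\<^esub>})"

end

theory Submission
  imports Defs "HOL-Number_Theory.Number_Theory"
begin



lemma (in group) subgroup_pow_card:
  assumes "subgroup H G" "finite H" "x \<in> H"
  shows "x [^] card H = \<one>"
proof -
  interpret H: group "G\<lparr>carrier := H\<rparr>" using subgroup.subgroup_is_group[OF assms(1)] is_group by blast
  have "x [^]\<^bsub>G\<lparr>carrier := H\<rparr>\<^esub> order (G\<lparr>carrier := H\<rparr>) = \<one>\<^bsub>G\<lparr>carrier := H\<rparr>\<^esub>"
    using H.pow_order_eq_1 assms by simp
  thus ?thesis by (simp add: order_def nat_pow_consistent[symmetric])
qed

lemma (in group) coprime_pow_one: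
  assumes "x \<in> carrier G" "x [^] (a::nat) = \<one>" "x [^] (b::nat) = \<one>" "coprime a b"
  shows "x = \<one>"
proof -
  have "ord x dvd a" "ord x dvd b" using pow_eq_id assms by auto
  hence "ord x dvd 1" using assms(4) by (metis gcd_greatest coprime_iff_gcd_eq_1)
  hence "x [^] (1::nat) = \<one>" using pow_eq_id assms(1) by blast
  thus ?thesis using assms(1) by simp
qed

lemma (in group) cauchy_lite:
  assumes "finite (carrier G)" "Factorial_Ring.prime q" "q dvd order G"
  shows "\<exists>x\<in>carrier G. x \<noteq> \<one> \<and> x [^] q = \<one>"
proof -
  obtain m where m: "order G = q ^ 1 * m" using assms(3) by auto
  have "sylow G q 1 m" unfolding sylow_eq sylow_axioms_def using assms m is_group by auto
  then obtain H where H: "subgroup H G" "card H = q" using sylow.sylow_thm by fastforce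
  have "finite H" using H assms(1) subgroup.subset finite_subset by metis
  have "card H > 1" using H assms(2) prime_gt_1_nat by auto
  have "\<not> H \<subseteq> {\<one>}"
  proof
    assume "H \<subseteq> {\<one>}" hence "card H \<le> card {\<one>}" by (rule card_mono[rotated]) simp
    thus False using \<open>card H > 1\<close> by simp
  qed
  then obtain x where x: "x \<in> H" "x \<noteq> \<one>" by blast
  have "x [^] q = \<one>" using subgroup_pow_card[OF H(1) \<open>finite H\<close> x(1)] H by simp
  thus ?thesis using x H subgroup.subset by blast
qed




locale L22 = group G for G (structure) +
  fixes p :: nat and D Z0
  assumes fin: "finite (carrier G)"
    and pprime: "Factorial_Ring.prime p"
    and pgcd: "gcd (p - 1) (order G) = 1"
    and D_def: "D = derived G (carrier G)"
    and cardD: "card D = p ^ 2"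
    and Z0_def: "Z0 = D \<inter> center G"
    and cardZ0: "card Z0 = p"
begin

lemma D_sub: "subgroup D G"
  using derived_is_subgroup[of "carrier G"] D_def by simp

lemma D_carr: "D \<subseteq> carrier G" using D_sub subgroup.subset by blast

lemma comm_in_D: "g \<in> carrier G \<Longrightarrow> h \<in> carrier G \<Longrightarrow> g \<otimes> h \<otimes> inv g \<otimes> inv h \<in> D"
  unfolding D_def derived_def by (rule generate.incl) blast

lemma conj_in_D: assumes "g \<in> carrier G" "d \<in> D" shows "g \<otimes> d \<otimes> inv g \<in> D"
proof -
  have d: "d \<in> carrier G" using assms D_carr by auto
  have "g \<otimes> d \<otimes> inv g = (g \<otimes> d \<otimes> inv g \<otimes> inv d) \<otimes> d"
    using assms d by (simp add: m_assoc)
  thus ?thesis using comm_in_D[OF assms(1) d] assms(2) D_sub subgroup.m_closed by metis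
qed

lemma comm_inv: assumes "a \<in> carrier G" "x \<in> carrier G" "a \<otimes> x = x \<otimes> a"
  shows "inv a \<otimes> x = x \<otimes> inv a"
proof -
  have "inv a \<otimes> x = inv a \<otimes> x \<otimes> (a \<otimes> inv a)" using assms(1,2) by (simp only: r_inv r_one inv_closed m_closed)
  also have "\<dots> = inv a \<otimes> (x \<otimes> a) \<otimes> inv a" using assms(1,2) by (simp only: m_assoc inv_closed m_closed)
  also have "\<dots> = inv a \<otimes> (a \<otimes> x) \<otimes> inv a" using assms by simp
  also have "\<dots> = x \<otimes> inv a" using assms(1,2) by (simp only: m_assoc[symmetric] l_inv l_one inv_closed m_closed)
  finally show ?thesis .
qed

lemma center_carr: "center G \<subseteq> carrier G" unfolding center_def by auto

lemma Z0_carr: "Z0 \<subseteq> carrier G" using Z0_def center_carr by auto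
lemma Z0_D: "Z0 \<subseteq> D" using Z0_def by auto
lemma Z0_comm: "z \<in> Z0 \<Longrightarrow> x \<in> carrier G \<Longrightarrow> z \<otimes> x = x \<otimes> z"
  using Z0_def unfolding center_def by auto

lemma center_sub: "subgroup (center G) G"
proof (rule subgroupI)
  show "center G \<subseteq> carrier G" by (rule center_carr)
  show "center G \<noteq> {}" unfolding center_def by (auto intro!: exI[of _ \<one>])
  fix a b assume a: "a \<in> center G" and b: "b \<in> center G"
  have ac: "a \<in> carrier G" and bc: "b \<in> carrier G" using a b center_carr by auto
  show "inv a \<in> center G" unfolding center_def
  proof (safe)
    show "inv a \<in> carrier G" using ac by simp
    fix x assume x: "x \<in> carrier G"
    have "a \<otimes> x = x \<otimes> a" using a x unfolding center_def by auto
    thus "inv a \<otimes> x = x \<otimes> inv a" using ac x by (metis comm_inv) 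
  qed
  show "a \<otimes> b \<in> center G" unfolding center_def
  proof (safe)
    show "a \<otimes> b \<in> carrier G" using ac bc by simp
    fix x assume x: "x \<in> carrier G"
    have "a \<otimes> x = x \<otimes> a" "b \<otimes> x = x \<otimes> b" using a b x unfolding center_def by auto
    thus "a \<otimes> b \<otimes> x = x \<otimes> (a \<otimes> b)" using ac bc x by (metis m_assoc)
  qed
qed

lemma Z0_sub: "subgroup Z0 G"
  using Z0_def subgroups_Inter_pair[OF D_sub center_sub] by simp

lemma finD: "finite D" using D_carr fin finite_subset by blast
lemma finZ0: "finite Z0" using Z0_carr fin finite_subset by blast

lemma p_gt1: "p > 1" using pprime prime_gt_1_nat by blast

lemma D_pow: "d \<in> D \<Longrightarrow> d [^] (p^2) = \<one>"
  using subgroup_pow_card[OF D_sub finD] cardD by simp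
lemma Z0_pow: "z \<in> Z0 \<Longrightarrow> z [^] p = \<one>"
  using subgroup_pow_card[OF Z0_sub finZ0] cardZ0 by simp

end



lemma (in group) subgroup_pow_closed: "subgroup H G \<Longrightarrow> x \<in> H \<Longrightarrow> x [^] (n::nat) \<in> H"
  by (induction n) (auto simp: subgroup.one_closed subgroup.m_closed)

context L22 begin

lemma exists_y: "\<exists>y. y \<in> D \<and> y \<notin> Z0"
proof (rule ccontr)
  assume "\<not> ?thesis" hence "D \<subseteq> Z0" by blast
  hence "card D \<le> card Z0" using finZ0 card_mono by blast
  hence "p^2 \<le> p" using cardD cardZ0 by simp
  thus False using p_gt1 by (simp add: power2_eq_square)
qed

end

locale L22y = L22 +
  fixes y assumes yD: "y \<in> D" and ynZ: "y \<notin> Z0"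
begin

lemma yc: "y \<in> carrier G" using yD D_carr by auto

definition e :: nat where "e = (LEAST n::nat. 0 < n \<and> y [^] n \<in> Z0)"

lemma e_ex: "0 < p^2 \<and> y [^] (p^2) \<in> Z0"
proof
  show "0 < p^2" using p_gt1 by simp
  show "y [^] (p^2) \<in> Z0" unfolding D_pow[OF yD] by (rule subgroup.one_closed[OF Z0_sub])
qed

lemma e_pos_Z: "0 < e \<and> y [^] e \<in> Z0"
  unfolding e_def by (rule LeastI[of _ "p^2"]) (rule e_ex)

lemma e_pos: "0 < e" using e_pos_Z by blast
lemma e_Z: "y [^] e \<in> Z0" using e_pos_Z by blast

lemma e_min: "0 < (n::nat) \<Longrightarrow> n < e \<Longrightarrow> y [^] n \<notin> Z0"
  unfolding e_def using not_less_Least[of n "\<lambda>n::nat. 0 < n \<and> y [^] n \<in> Z0"] by blast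

lemma pow_Z_iff: "y [^] (i::nat) \<in> Z0 \<longleftrightarrow> e dvd i"
proof
  assume "e dvd i" then obtain q where "i = e * q" by auto
  hence "y [^] i = (y [^] e) [^] q" using yc by (simp add: nat_pow_pow)
  thus "y [^] i \<in> Z0" using subgroup_pow_closed[OF Z0_sub e_Z] by simp
next
  assume A: "y [^] i \<in> Z0"
  define q r where "q = i div e" and "r = i mod e"
  have i: "i = e * q + r" unfolding q_def r_def by simp
  have eq: "y [^] i = y [^] (e * q) \<otimes> y [^] r" using yc i by (simp add: nat_pow_mult)
  have yq: "y [^] (e*q) \<in> Z0" using subgroup_pow_closed[OF Z0_sub e_Z, of q] yc by (simp add: nat_pow_pow)
  have "y [^] r = inv (y [^] (e * q)) \<otimes> y [^] i" using eq yc by (simp add: inv_solve_left)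
  hence "y [^] r \<in> Z0" using yq A Z0_sub by (simp add: subgroup.m_closed subgroup.m_inv_closed)
  moreover have "r < e" unfolding r_def using e_pos by simp
  ultimately have "r = 0" using e_min by blast
  thus "e dvd i" unfolding r_def by auto
qed

lemma rep_inj:
  assumes "i < e" "j < e" "z \<in> Z0" "z' \<in> Z0" "y [^] i \<otimes> z = y [^] j \<otimes> z'" "i \<le> j"
  shows "i = j \<and> z = z'"
proof -
  have zc: "z \<in> carrier G" "z' \<in> carrier G" using assms Z0_carr by auto
  have "y [^] j = y [^] i \<otimes> y [^] (j - i)" using yc assms(6) by (simp add: nat_pow_mult)
  hence "y [^] i \<otimes> z = y [^] i \<otimes> (y [^] (j - i) \<otimes> z')" using assms(5) yc zc by (simp add: m_assoc)
  hence "z = y [^] (j - i) \<otimes> z'" using yc zc by simp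
  hence "y [^] (j - i) = z \<otimes> inv z'" using yc zc by (simp add: inv_solve_right)
  hence "y [^] (j - i) \<in> Z0" using assms(3,4) Z0_sub by (simp add: subgroup.m_closed subgroup.m_inv_closed)
  hence "j - i = 0" using e_min assms by (meson diff_le_self le_less_trans not_gr0)
  hence "i = j" using assms(6) by simp
  thus ?thesis using \<open>z = y [^] (j - i) \<otimes> z'\<close> zc by simp
qed

definition R where "R = (\<lambda>(i, z). y [^] (i::nat) \<otimes> z)"

lemma R_inj: "inj_on R ({..<e} \<times> Z0)"
proof (rule inj_onI)
  fix a b assume A0: "a \<in> {..<e} \<times> Z0" "b \<in> {..<e} \<times> Z0" "R a = R b"
  obtain i z where a: "a = (i, z)" by (cases a)
  obtain j z' where b: "b = (j, z')" by (cases b)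
  have A: "i < e" "j < e" "z \<in> Z0" "z' \<in> Z0" "y [^] i \<otimes> z = y [^] j \<otimes> z'"
    using A0 a b unfolding R_def by auto
  have "i = j \<and> z = z'"
  proof (cases "i \<le> j")
    case True thus ?thesis using rep_inj A by blast
  next
    case False thus ?thesis using rep_inj[of j i z' z] A by auto
  qed
  thus "a = b" using a b by simp
qed

lemma R_img: "R ` ({..<e} \<times> Z0) \<subseteq> D"
  unfolding R_def using subgroup_pow_closed[OF D_sub yD] Z0_D D_sub
  by (auto intro!: subgroup.m_closed)

lemma card_R: "card (R ` ({..<e} \<times> Z0)) = e * p"
  using card_image[OF R_inj] cardZ0 by (simp add: card_cartesian_product)

lemma e_eq: "e = p"
proof -
  have "e * p \<le> p ^ 2" using card_mono[OF finD R_img] card_R cardD by simp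
  hence le: "e \<le> p" using p_gt1 by (simp add: power2_eq_square)
  have "e dvd p ^ 2" using pow_Z_iff e_ex by blast
  then obtain i where i: "i \<le> 2" "e = p ^ i" using divides_primepow_nat[OF pprime] by auto
  have "i \<noteq> 0" using i ynZ pow_Z_iff[of 1] yc by auto
  moreover have "i \<noteq> 2" using i le p_gt1 by (auto simp: power2_eq_square)
  ultimately have "i = 1" using i by auto
  thus ?thesis using i by simp
qed

lemma D_eq: "D = R ` ({..<p} \<times> Z0)"
proof -
  have "card (R ` ({..<p} \<times> Z0)) = card D" using card_R e_eq cardD by (simp add: power2_eq_square)
  thus ?thesis using card_subset_eq[OF finD R_img[unfolded e_eq]] by simp
qed

lemma D_rep: assumes "d \<in> D" obtains i z where "i < p" "z \<in> Z0" "d = y [^] i \<otimes> z"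
  using assms D_eq unfolding R_def by auto

end



lemma NT:
  fixes a N p :: nat
  assumes "Factorial_Ring.prime p" "0 < a" "a < p" "p dvd a ^ N - 1" "coprime N (p - 1)" "0 < N"
  shows "a = 1"
proof -
  have c1: "[a ^ N = 1] (mod p)" using assms(2,4) by (simp add: cong_altdef_nat Suc_leI)
  have nd: "\<not> p dvd a" using assms(2,3) by (simp add: nat_dvd_not_less)
  have c2: "[a ^ (p - 1) = 1] (mod p)" using fermat_theorem[OF assms(1) nd] .
  obtain s t where st: "N * s = (p - 1) * t + gcd N (p - 1)" using bezout_nat[of N "p - 1"] assms(6) by auto
  hence st': "N * s = (p - 1) * t + 1" using assms(5) by simp
  have "[a ^ (N * s) = 1] (mod p)" using cong_pow[OF c1, of s] by (simp add: power_mult)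
  moreover have "a ^ (N * s) = a ^ ((p - 1) * t) * a" using st' by (simp add: power_add)
  moreover have "[a ^ ((p - 1) * t) = 1] (mod p)" using cong_pow[OF c2, of t] by (simp add: power_mult)
  ultimately have "[1 * a = 1] (mod p)"
    by (metis cong_mult cong_refl cong_sym cong_trans)
  hence "a mod p = 1 mod p" by (simp add: cong_def)
  thus "a = 1" using assms(3) prime_gt_1_nat[OF assms(1)] by simp
qed

context group begin

lemma cancel_l: "g \<in> carrier G \<Longrightarrow> z \<in> carrier G \<Longrightarrow> inv g \<otimes> (g \<otimes> z) = z"
  by (simp add: m_assoc[symmetric])
lemma cancel_r: "g \<in> carrier G \<Longrightarrow> z \<in> carrier G \<Longrightarrow> g \<otimes> (inv g \<otimes> z) = z"
  by (simp add: m_assoc[symmetric])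

lemma conj_mult: "g \<in> carrier G \<Longrightarrow> x \<in> carrier G \<Longrightarrow> u \<in> carrier G \<Longrightarrow>
  g \<otimes> (x \<otimes> u) \<otimes> inv g = (g \<otimes> x \<otimes> inv g) \<otimes> (g \<otimes> u \<otimes> inv g)"
  by (simp add: m_assoc cancel_l)

lemma conj_pow: "g \<in> carrier G \<Longrightarrow> x \<in> carrier G \<Longrightarrow>
  g \<otimes> x [^] (n::nat) \<otimes> inv g = (g \<otimes> x \<otimes> inv g) [^] n"
proof (induction n)
  case 0 thus ?case by simp
next
  case (Suc n)
  have "g \<otimes> x [^] Suc n \<otimes> inv g = g \<otimes> (x [^] n \<otimes> x) \<otimes> inv g" by simp
  also have "\<dots> = (g \<otimes> x [^] n \<otimes> inv g) \<otimes> (g \<otimes> x \<otimes> inv g)" using Suc.prems by (simp add: conj_mult)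
  finally show ?case using Suc by simp
qed

end




context L22 begin

lemma Z0_conj: "z \<in> Z0 \<Longrightarrow> g \<in> carrier G \<Longrightarrow> g \<otimes> z \<otimes> inv g = z"
proof -
  assume z: "z \<in> Z0" and g: "g \<in> carrier G"
  have zc: "z \<in> carrier G" using z Z0_carr by auto
  have "g \<otimes> z \<otimes> inv g = z \<otimes> g \<otimes> inv g" using Z0_comm[OF z g] by simp
  also have "\<dots> = z" using zc g by (simp add: m_assoc)
  finally show ?thesis .
qed

lemma ord_coprime: assumes g: "g \<in> carrier G" shows "coprime (ord g) (p - 1)"
proof -
  have d1: "gcd (ord g) (p - 1) dvd order G" by (rule dvd_trans[OF gcd_dvd1 ord_dvd_group_order[OF g]])
  have d2: "gcd (ord g) (p - 1) dvd p - 1" by (rule gcd_dvd2)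
  have "gcd (ord g) (p - 1) dvd gcd (p - 1) (order G)" by (rule gcd_greatest[OF d2 d1])
  hence "gcd (ord g) (p - 1) = 1" unfolding pgcd by (rule nat_dvd_1_iff_1[THEN iffD1])
  thus ?thesis by (rule gcd_eq_1_imp_coprime)
qed

end

context L22y begin

lemma K: assumes g: "g \<in> carrier G" shows "\<exists>z\<in>Z0. g \<otimes> y \<otimes> inv g = y \<otimes> z"
proof -
  obtain a z0 where a: "a < p" "z0 \<in> Z0" "g \<otimes> y \<otimes> inv g = y [^] a \<otimes> z0"
    using D_rep[OF conj_in_D[OF g yD]] by metis
  have z0c: "z0 \<in> carrier G" using a Z0_carr by auto
  have "a \<noteq> 0"
  proof
    assume "a = 0"
    hence "g \<otimes> y \<otimes> inv g = z0" using a z0c by simp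
    hence "inv g \<otimes> (g \<otimes> y \<otimes> inv g) \<otimes> g = inv g \<otimes> z0 \<otimes> g" by simp
    hence "y = z0" using g yc z0c Z0_conj[OF a(2), of "inv g"] by (simp add: m_assoc cancel_l)
    thus False using ynZ a by simp
  qed
  have iter: "\<exists>w\<in>Z0. g [^] j \<otimes> y \<otimes> inv (g [^] j) = y [^] (a ^ j) \<otimes> w" for j :: nat
  proof (induction j)
    case 0 thus ?case using yc subgroup.one_closed[OF Z0_sub] by (intro bexI[of _ \<one>]) auto
  next
    case (Suc j)
    then obtain w where w: "w \<in> Z0" "g [^] j \<otimes> y \<otimes> inv (g [^] j) = y [^] (a ^ j) \<otimes> w" by blast
    have wc: "w \<in> carrier G" using w Z0_carr by auto
    have "g [^] Suc j \<otimes> y \<otimes> inv (g [^] Suc j) = g \<otimes> (g [^] j \<otimes> y \<otimes> inv (g [^] j)) \<otimes> inv g"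
      unfolding nat_pow_Suc2[OF g] using g yc by (simp add: inv_mult_group m_assoc)
    also have "\<dots> = g \<otimes> (y [^] (a ^ j) \<otimes> w) \<otimes> inv g" using w by simp
    also have "\<dots> = (g \<otimes> y [^] (a ^ j) \<otimes> inv g) \<otimes> w"
      using conj_mult[OF g _ wc, of "y [^] (a ^ j)"] yc Z0_conj[OF w(1) g] by simp
    also have "\<dots> = (y [^] a \<otimes> z0) [^] (a ^ j) \<otimes> w" using conj_pow[OF g yc] a by simp
    also have "\<dots> = (y [^] (a * a ^ j) \<otimes> z0 [^] (a ^ j)) \<otimes> w"
      using pow_mult_distrib[of "y [^] a" z0 "a ^ j"] Z0_comm[OF a(2), of "y [^] a"] yc z0c
      by (simp add: nat_pow_pow)
    also have "\<dots> = y [^] (a ^ Suc j) \<otimes> (z0 [^] (a ^ j) \<otimes> w)" using yc z0c wc by (simp add: m_assoc)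
    finally show ?case using w(1) a(2) Z0_sub
      by (intro bexI[of _ "z0 [^] (a ^ j) \<otimes> w"]) (auto intro: subgroup.m_closed subgroup_pow_closed)
  qed
  define N where "N = ord g"
  have N0: "0 < N" unfolding N_def using ord_ge_1[OF fin g] by simp
  obtain w where w: "w \<in> Z0" "g [^] N \<otimes> y \<otimes> inv (g [^] N) = y [^] (a ^ N) \<otimes> w" using iter by blast
  have wc: "w \<in> carrier G" using w Z0_carr by auto
  have gN: "g [^] N = \<one>" unfolding N_def using g by simp
  have aN: "a ^ N = Suc (a ^ N - 1)" using \<open>a \<noteq> 0\<close> by simp
  have "y = y [^] (a ^ N) \<otimes> w" using w gN yc by simp
  also have "\<dots> = y \<otimes> (y [^] (a ^ N - 1) \<otimes> w)" using yc wc aN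
    by (metis m_assoc nat_pow_Suc2 nat_pow_closed)
  finally have "y [^] (a ^ N - 1) \<otimes> w = \<one>" using yc wc by simp
  hence "y [^] (a ^ N - 1) = inv w" using yc wc by (simp add: inv_equality[symmetric] inv_comm)
  hence "y [^] (a ^ N - 1) \<in> Z0" using w Z0_sub subgroup.m_inv_closed by metis
  hence "p dvd a ^ N - 1" using pow_Z_iff e_eq by simp
  hence "a = 1" using NT[OF pprime _ a(1) _ _ N0] \<open>a \<noteq> 0\<close> ord_coprime[OF g] unfolding N_def by auto
  thus ?thesis using a yc by auto
qed

end



context group begin
lemma conj_eq_comm: "x \<in> carrier G \<Longrightarrow> g \<in> carrier G \<Longrightarrow> x \<otimes> g \<otimes> inv x = g \<Longrightarrow> x \<otimes> g = g \<otimes> x"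
  by (metis inv_solve_right' m_closed)

lemma conj_iter: assumes "x \<in> carrier G" "g \<in> carrier G"
  shows "x [^] Suc j \<otimes> g \<otimes> inv (x [^] Suc j) = x \<otimes> (x [^] j \<otimes> g \<otimes> inv (x [^] j)) \<otimes> inv x"
  unfolding nat_pow_Suc2[OF assms(1)] using assms by (simp add: inv_mult_group m_assoc)
end

context L22y begin

lemma D_conj_Z: assumes d: "d \<in> D" and g: "g \<in> carrier G"
  shows "\<exists>c\<in>Z0. g \<otimes> d \<otimes> inv g = d \<otimes> c"
proof -
  obtain i z where iz0: "i < p" "z \<in> Z0" "d = y [^] i \<otimes> z" using D_rep[OF d] by metis
    have iz: "z \<in> Z0" "d = y [^] i \<otimes> z" using iz0 by auto
  obtain z1 where z1: "z1 \<in> Z0" "g \<otimes> y \<otimes> inv g = y \<otimes> z1" using K[OF g] by blast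
  have zc: "z \<in> carrier G" "z1 \<in> carrier G" using iz z1 Z0_carr by auto
  have c: "z1 [^] i \<in> Z0" using subgroup_pow_closed[OF Z0_sub z1(1)] .
  have cc: "z1 [^] i \<in> carrier G" using zc by simp
  have "g \<otimes> d \<otimes> inv g = (g \<otimes> y [^] i \<otimes> inv g) \<otimes> (g \<otimes> z \<otimes> inv g)"
    using iz(2) conj_mult[OF g _ zc(1), of "y [^] i"] yc by simp
  also have "\<dots> = (y \<otimes> z1) [^] i \<otimes> z" using conj_pow[OF g yc] z1 Z0_conj[OF iz(1) g] by simp
  also have "\<dots> = y [^] i \<otimes> z1 [^] i \<otimes> z"
    using pow_mult_distrib[of y z1 i] Z0_comm[OF z1(1) yc] yc zc by simp
  also have "\<dots> = y [^] i \<otimes> (z \<otimes> z1 [^] i)" using Z0_comm[OF c zc(1)] yc zc by (simp add: m_assoc)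
  also have "\<dots> = d \<otimes> z1 [^] i" using iz yc zc by (simp add: m_assoc)
  finally show ?thesis using c by blast
qed

lemma K2: assumes d: "d \<in> D" and g: "g \<in> carrier G"
  shows "d \<otimes> g \<otimes> inv d \<otimes> inv g \<in> Z0"
proof -
  obtain c where c: "c \<in> Z0" "g \<otimes> d \<otimes> inv g = d \<otimes> c" using D_conj_Z[OF d g] by blast
  have dc: "d \<in> carrier G" "c \<in> carrier G" using d D_carr c Z0_carr by auto
  have "d \<otimes> g \<otimes> inv d \<otimes> inv g = d \<otimes> inv (g \<otimes> d \<otimes> inv g)"
    using dc g by (simp add: inv_mult_group m_assoc)
  also have "\<dots> = d \<otimes> (inv c \<otimes> inv d)" using c dc by (simp add: inv_mult_group)
  also have "\<dots> = inv c \<otimes> d \<otimes> inv d"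
    using Z0_comm[OF subgroup.m_inv_closed[OF Z0_sub c(1)] dc(1)] dc by (simp add: m_assoc[symmetric])
  also have "\<dots> = inv c" using dc by (simp add: m_assoc)
  finally show ?thesis using c Z0_sub subgroup.m_inv_closed by metis
qed

lemma C: assumes x: "x \<in> carrier G" and cop: "coprime (ord x) p"
  shows "x \<in> center G"
proof -
  define N where "N = ord x"
  have xN: "x [^] N = \<one>" unfolding N_def using x by simp
  obtain z1 where z1: "z1 \<in> Z0" "x \<otimes> y \<otimes> inv x = y \<otimes> z1" using K[OF x] by blast
  have z1c: "z1 \<in> carrier G" using z1 Z0_carr by auto
  have it1: "x [^] j \<otimes> y \<otimes> inv (x [^] j) = y \<otimes> z1 [^] j" for j :: nat
  proof (induction j)
    case 0 thus ?case using yc by simp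
  next
    case (Suc j)
    have "x [^] Suc j \<otimes> y \<otimes> inv (x [^] Suc j) = x \<otimes> (y \<otimes> z1 [^] j) \<otimes> inv x"
      using conj_iter[OF x yc] Suc by simp
    also have "\<dots> = (y \<otimes> z1) \<otimes> z1 [^] j"
      using conj_mult[OF x yc, of "z1 [^] j"] z1 z1c Z0_conj[OF subgroup_pow_closed[OF Z0_sub z1(1)] x] by simp
    also have "\<dots> = y \<otimes> z1 [^] Suc j"
      unfolding nat_pow_Suc2[OF z1c] using yc z1c by (simp add: m_assoc)
    finally show ?case .
  qed
  have "y = y \<otimes> z1 [^] N" using it1[of N] xN yc by simp
  hence "z1 [^] N = \<one>" using yc z1c by simp
  hence z1one: "z1 = \<one>" using coprime_pow_one[OF z1c _ Z0_pow[OF z1(1)]] cop unfolding N_def by blast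
  hence xy: "x \<otimes> y \<otimes> inv x = y" using z1 yc by simp
  have xD: "x \<otimes> d \<otimes> inv x = d" if d: "d \<in> D" for d
  proof -
    obtain i z where iz0: "i < p" "z \<in> Z0" "d = y [^] i \<otimes> z" using D_rep[OF d] by metis
    have iz: "z \<in> Z0" "d = y [^] i \<otimes> z" using iz0 by auto
    have zc: "z \<in> carrier G" using iz Z0_carr by auto
    have "x \<otimes> d \<otimes> inv x = (x \<otimes> y [^] i \<otimes> inv x) \<otimes> (x \<otimes> z \<otimes> inv x)"
      using iz(2) conj_mult[OF x _ zc, of "y [^] i"] yc by simp
    also have "\<dots> = d" using conj_pow[OF x yc] xy Z0_conj[OF iz(1) x] iz by simp
    finally show ?thesis .
  qed
  have "x \<otimes> g = g \<otimes> x" if g: "g \<in> carrier G" for g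
  proof -
    define c where "c = x \<otimes> g \<otimes> inv x \<otimes> inv g"
    have cD: "c \<in> D" unfolding c_def using comm_in_D[OF x g] .
    have cc: "c \<in> carrier G" using cD D_carr by auto
    have xg: "x \<otimes> g \<otimes> inv x = c \<otimes> g" unfolding c_def using x g by (simp add: m_assoc)
    have it2: "x [^] j \<otimes> g \<otimes> inv (x [^] j) = c [^] j \<otimes> g" for j :: nat
    proof (induction j)
      case 0 thus ?case using g by simp
    next
      case (Suc j)
      have "x [^] Suc j \<otimes> g \<otimes> inv (x [^] Suc j) = x \<otimes> (c [^] j \<otimes> g) \<otimes> inv x"
        using conj_iter[OF x g] Suc by simp
      also have "\<dots> = (x \<otimes> c [^] j \<otimes> inv x) \<otimes> (c \<otimes> g)"
        using conj_mult[OF x _ g, of "c [^] j"] cc xg by simp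
      also have "\<dots> = c [^] j \<otimes> (c \<otimes> g)" using xD[OF subgroup_pow_closed[OF D_sub cD]] by simp
      also have "\<dots> = c [^] Suc j \<otimes> g" using cc g by (simp add: m_assoc)
      finally show ?case .
    qed
    have "g = c [^] N \<otimes> g" using it2[of N] xN g by simp
    hence "c [^] N = \<one>" using cc g by simp
    moreover have "coprime N (p ^ 2)" using cop unfolding N_def by simp
    ultimately have "c = \<one>" using coprime_pow_one[OF cc _ D_pow[OF cD]] by blast
    hence "x \<otimes> g \<otimes> inv x = g" using xg g by simp
    thus ?thesis using conj_eq_comm x g by blast
  qed
  thus ?thesis unfolding center_def using x by auto
qed

end



lemma (in group) comm_one_imp: "h \<in> carrier G \<Longrightarrow> k \<in> carrier G \<Longrightarrow> h \<otimes> k \<otimes> inv h \<otimes> inv k = \<one> \<Longrightarrow> h \<otimes> k = k \<otimes> h"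
  by (metis inv_closed inv_solve_right' l_one m_closed)

context L22 begin

lemma withY: "(\<And>y. L22y G p D Z0 y \<Longrightarrow> P) \<Longrightarrow> P"
proof -
  assume H: "\<And>y. L22y G p D Z0 y \<Longrightarrow> P"
  obtain y where y: "y \<in> D" "y \<notin> Z0" using exists_y by blast
  have "L22y G p D Z0 y"
    by (rule L22y.intro, unfold_locales) (use fin pprime pgcd D_def cardD Z0_def cardZ0 y in auto)
  thus P by (rule H)
qed

lemma K2': "d \<in> D \<Longrightarrow> g \<in> carrier G \<Longrightarrow> d \<otimes> g \<otimes> inv d \<otimes> inv g \<in> Z0"
  by (rule withY) (rule L22y.K2)

lemma Cthm: "x \<in> carrier G \<Longrightarrow> coprime (ord x) p \<Longrightarrow> x \<in> center G"
  by (rule withY) (rule L22y.C)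

lemma LC1: "lower_central G (Suc 0) = D"
  unfolding D_def derived_def by (simp add: comm_subgroup_def)

definition E where "E = comm_subgroup G D (carrier G)"

lemma LC2: "lower_central G (Suc (Suc 0)) = E"
  using LC1 unfolding E_def by simp

lemma E_Z0: "E \<subseteq> Z0"
  unfolding E_def comm_subgroup_def
  by (rule generate_subgroup_incl[OF _ Z0_sub]) (use K2' in blast)

lemma E_ne: "E \<noteq> {\<one>}"
proof
  assume E1: "E = {\<one>}"
  have "D \<subseteq> center G"
  proof
    fix d assume d: "d \<in> D"
    have dc: "d \<in> carrier G" using d D_carr by auto
    have "d \<otimes> g = g \<otimes> d" if g: "g \<in> carrier G" for g
    proof -
      have "d \<otimes> g \<otimes> inv d \<otimes> inv g \<in> E" unfolding E_def comm_subgroup_def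
        by (rule generate.incl) (use d g in blast)
      thus ?thesis using E1 comm_one_imp[OF dc g] by blast
    qed
    thus "d \<in> center G" unfolding center_def using dc by auto
  qed
  hence "Z0 = D" using Z0_def by auto
  hence "p = p ^ 2" using cardD cardZ0 by simp
  thus False using p_gt1 by (simp add: power2_eq_square)
qed

lemma LC3: "lower_central G (Suc (Suc (Suc 0))) = {\<one>}"
proof -
  have gens: "(\<Union>h\<in>E. \<Union>k\<in>carrier G. {h \<otimes> k \<otimes> inv h \<otimes> inv k}) \<subseteq> {\<one>}"
  proof (clarify)
    fix h k assume h: "h \<in> E" and k: "k \<in> carrier G"
    have hZ: "h \<in> Z0" using h E_Z0 by auto
    have hc: "h \<in> carrier G" using hZ Z0_carr by auto
    have "h \<otimes> k \<otimes> inv h \<otimes> inv k = k \<otimes> h \<otimes> inv h \<otimes> inv k" using Z0_comm[OF hZ k] by simp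
    also have "\<dots> = \<one>" using hc k by (simp add: m_assoc)
    finally show "h \<otimes> k \<otimes> inv h \<otimes> inv k = \<one>" .
  qed
  have "lower_central G (Suc (Suc (Suc 0))) = comm_subgroup G E (carrier G)" using LC2 by simp
  also have "\<dots> = {\<one>}" unfolding comm_subgroup_def
  proof
    show "generate G (\<Union>h\<in>E. \<Union>k\<in>carrier G. {h \<otimes> k \<otimes> inv h \<otimes> inv k}) \<subseteq> {\<one>}"
      by (rule generate_subgroup_incl[OF gens triv_subgroup])
    show "{\<one>} \<subseteq> generate G (\<Union>h\<in>E. \<Union>k\<in>carrier G. {h \<otimes> k \<otimes> inv h \<otimes> inv k})"
      using generate.one by blast
  qed
  finally show ?thesis .
qed

lemma D_ne: "D \<noteq> {\<one>}"
proof
  assume "D = {\<one>}" hence "p ^ 2 = 1" using cardD by simp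
  thus False using p_gt1 by (simp add: power2_eq_square)
qed

lemma nil3: "nilpotent_of_class G 3"
proof -
  have "carrier G \<noteq> {\<one>}" using D_ne D_carr subgroup.one_closed[OF D_sub] by blast
  hence "\<forall>k<3. lower_central G k \<noteq> {\<one>}"
    using LC1 LC2 D_ne E_ne by (auto simp: less_Suc_eq numeral_3_eq_3)
  thus ?thesis unfolding nilpotent_of_class_def using LC3 by (simp add: numeral_3_eq_3)
qed

end



lemma (in group) quot_pow: assumes "x \<in> carrier G" "y \<in> carrier G" "x [^] (n::nat) = \<one>" "y [^] n = \<one>"
  shows "(x \<otimes> y) [^] n \<in> derived G (carrier G)"
proof -
  let ?D = "derived G (carrier G)"
  interpret N: normal ?D G by (rule derived_self_is_normal)
  have h: "(\<lambda>a. ?D #> a) \<in> hom G (G Mod ?D)" by (rule N.r_coset_hom_Mod)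
  interpret Q: comm_group "G Mod ?D" by (rule derived_quot_is_comm_group)
  have gq: "group (G Mod ?D)" by (rule Q.is_group)
  have hx: "?D #> x \<in> carrier (G Mod ?D)" "?D #> y \<in> carrier (G Mod ?D)"
    using h assms(1,2) unfolding hom_def by auto
  have "?D #> ((x \<otimes> y) [^] n) = (?D #> (x \<otimes> y)) [^]\<^bsub>G Mod ?D\<^esub> n"
    using hom_nat_pow[OF h _ is_group gq] assms by simp
  also have "\<dots> = ((?D #> x) \<otimes>\<^bsub>G Mod ?D\<^esub> (?D #> y)) [^]\<^bsub>G Mod ?D\<^esub> n"
    using h assms(1,2) unfolding hom_def by simp
  also have "\<dots> = (?D #> x) [^]\<^bsub>G Mod ?D\<^esub> n \<otimes>\<^bsub>G Mod ?D\<^esub> (?D #> y) [^]\<^bsub>G Mod ?D\<^esub> n"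
    using Q.pow_mult_distrib[OF Q.m_comm[OF hx] hx] .
  also have "\<dots> = (?D #> (x [^] n)) \<otimes>\<^bsub>G Mod ?D\<^esub> (?D #> (y [^] n))"
    by (simp only: hom_nat_pow[OF h assms(1) is_group gq, symmetric] hom_nat_pow[OF h assms(2) is_group gq, symmetric])
  also have "\<dots> = (?D #> \<one>) \<otimes>\<^bsub>G Mod ?D\<^esub> (?D #> \<one>)" using assms by simp
  also have "\<dots> = ?D #> \<one>" using hom_mult[OF h one_closed one_closed] by simp
  also have "\<dots> = ?D" by (rule coset_mult_one[OF N.subset])
  finally have "?D #> ((x \<otimes> y) [^] n) = ?D" .
  moreover have "(x \<otimes> y) [^] n \<in> ?D #> ((x \<otimes> y) [^] n)"
    by (rule rcos_self[OF _ N.subgroup_axioms]) (use assms(1,2) in simp)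
  ultimately show ?thesis by simp
qed




locale L22d = L22 +
  fixes k m :: nat
  assumes ordG: "order G = p ^ k * m" and pndm: "\<not> p dvd m"
begin

definition A where "A = {x \<in> carrier G. x [^] m = \<one>}"
definition P where "P = {x \<in> carrier G. \<exists>j::nat. x [^] (p ^ j) = \<one>}"

lemma cop_pm: "coprime p m" using prime_imp_coprime[OF pprime pndm] .
lemma cop_pjm: "coprime (p ^ j) m" using cop_pm by simp

lemma A_center: assumes x: "x \<in> A" shows "x \<in> center G"
proof -
  have xc: "x \<in> carrier G" and xm: "x [^] m = \<one>" using x unfolding A_def by auto
  have "ord x dvd m" using pow_eq_id[OF xc] xm by simp
  hence "coprime (ord x) p" using cop_pm by (metis coprime_commute coprime_mult_left_iff dvdE)
  thus ?thesis using Cthm xc by blast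
qed

lemma A_comm: "a \<in> A \<Longrightarrow> x \<in> carrier G \<Longrightarrow> a \<otimes> x = x \<otimes> a"
  using A_center unfolding center_def by auto

lemma A_carr: "A \<subseteq> carrier G" unfolding A_def by auto
lemma P_carr: "P \<subseteq> carrier G" unfolding P_def by auto

lemma A_sub: "subgroup A G"
proof (rule subgroupI)
  show "A \<subseteq> carrier G" by (rule A_carr)
  show "A \<noteq> {}" unfolding A_def by auto
  fix a b assume a: "a \<in> A" and b: "b \<in> A"
  have ac: "a \<in> carrier G" "a [^] m = \<one>" and bc: "b \<in> carrier G" "b [^] m = \<one>" using a b unfolding A_def by auto
  show "inv a \<in> A" unfolding A_def using ac by (simp add: nat_pow_inv)
  have "(a \<otimes> b) [^] m = a [^] m \<otimes> b [^] m" using pow_mult_distrib[OF A_comm[OF a bc(1)] ac(1) bc(1)] .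
  thus "a \<otimes> b \<in> A" unfolding A_def using ac bc by simp
qed

lemma P_sub: "subgroup P G"
proof (rule subgroupI)
  show "P \<subseteq> carrier G" by (rule P_carr)
  show "P \<noteq> {}" unfolding P_def by (auto intro!: exI[of _ \<one>])
  fix a b assume a: "a \<in> P" and b: "b \<in> P"
  obtain i where ac: "a \<in> carrier G" "a [^] (p ^ i) = \<one>" using a unfolding P_def by auto
  obtain j where bc: "b \<in> carrier G" "b [^] (p ^ j) = \<one>" using b unfolding P_def by auto
  show "inv a \<in> P" unfolding P_def using ac by (auto simp add: nat_pow_inv)
  have "a [^] (p ^ (i + j)) = (a [^] (p ^ i)) [^] (p ^ j)" using ac(1) by (simp add: power_add nat_pow_pow)
  hence a2: "a [^] (p ^ (i + j)) = \<one>" using ac by simp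
  have "b [^] (p ^ (i + j)) = (b [^] (p ^ j)) [^] (p ^ i)" using bc(1) by (simp add: power_add nat_pow_pow mult.commute)
  hence b2: "b [^] (p ^ (i + j)) = \<one>" using bc by simp
  have "(a \<otimes> b) [^] (p ^ (i + j)) \<in> D" using quot_pow[OF ac(1) bc(1) a2 b2] D_def by simp
  hence "((a \<otimes> b) [^] (p ^ (i + j))) [^] (p ^ 2) = \<one>" by (rule D_pow)
  moreover have "p ^ (i + j + 2) = p ^ (i + j) * p ^ 2" by (rule power_add)
  ultimately have "(a \<otimes> b) [^] (p ^ (i + j + 2)) = \<one>" using ac bc by (simp only: nat_pow_pow m_closed)
  thus "a \<otimes> b \<in> P" unfolding P_def using ac bc by blast
qed

lemma D_P: "D \<subseteq> P" unfolding P_def using D_carr D_pow by blast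

lemma PA_one: "x \<in> P \<Longrightarrow> x \<in> A \<Longrightarrow> x = \<one>"
  unfolding P_def A_def using coprime_pow_one cop_pjm by blast

lemma decomp: assumes g: "g \<in> carrier G" shows "\<exists>a\<in>P. \<exists>b\<in>A. g = a \<otimes> b"
proof -
  have "p ^ k \<noteq> 0" using p_gt1 by simp
  then obtain s t where st: "p ^ k * s = m * t + gcd (p ^ k) m" using bezout_nat by blast
  hence st': "p ^ k * s = Suc (m * t)" using cop_pjm by simp
  define b where "b = g [^] (p ^ k * s)"
  define a where "a = inv (g [^] (m * t))"
  have go: "g [^] order G = \<one>" using pow_order_eq_1[OF g] .
  have "b [^] m = (g [^] order G) [^] s" unfolding b_def ordG using g
    by (simp add: nat_pow_pow ac_simps)
  hence "b \<in> A" unfolding A_def b_def using g go by simp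
  moreover have "a [^] (p ^ k) = inv ((g [^] order G) [^] t)" unfolding a_def ordG using g
    by (simp add: nat_pow_inv nat_pow_pow ac_simps)
  hence "a \<in> P" unfolding P_def a_def using g go by auto
  moreover have "g = a \<otimes> b" unfolding a_def b_def st' using g by (simp add: m_assoc[symmetric])
  ultimately show ?thesis by blast
qed

end



lemma (in group) cancel_mid: "u \<in> carrier G \<Longrightarrow> v \<in> carrier G \<Longrightarrow> w \<in> carrier G \<Longrightarrow>
  u \<otimes> v \<otimes> (inv v \<otimes> w) = u \<otimes> w"
  by (simp add: m_assoc cancel_r)

lemma (in group) comm_central:
  assumes c: "a1 \<in> carrier G" "a2 \<in> carrier G" "b1 \<in> carrier G" "b2 \<in> carrier G"
    and z1: "\<And>x. x \<in> carrier G \<Longrightarrow> b1 \<otimes> x = x \<otimes> b1"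
    and z2: "\<And>x. x \<in> carrier G \<Longrightarrow> b2 \<otimes> x = x \<otimes> b2"
  shows "(a1 \<otimes> b1) \<otimes> (a2 \<otimes> b2) \<otimes> inv (a1 \<otimes> b1) \<otimes> inv (a2 \<otimes> b2) = a1 \<otimes> a2 \<otimes> inv a1 \<otimes> inv a2"
proof -
  have e1: "(a1 \<otimes> b1) \<otimes> (a2 \<otimes> b2) = (a1 \<otimes> a2) \<otimes> (b1 \<otimes> b2)"
  proof -
    have "b1 \<otimes> (a2 \<otimes> b2) = a2 \<otimes> (b1 \<otimes> b2)"
      using z1[OF c(2)] c by (simp add: m_assoc[symmetric])
    thus ?thesis using c by (simp add: m_assoc)
  qed
  have e2: "(a2 \<otimes> b2) \<otimes> (a1 \<otimes> b1) = (a2 \<otimes> a1) \<otimes> (b2 \<otimes> b1)"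
  proof -
    have "b2 \<otimes> (a1 \<otimes> b1) = a1 \<otimes> (b2 \<otimes> b1)"
      using z2[OF c(1)] c by (simp add: m_assoc[symmetric])
    thus ?thesis using c by (simp add: m_assoc)
  qed
  have e3: "b2 \<otimes> b1 = b1 \<otimes> b2" using z2[OF c(3)] .
  have "(a1 \<otimes> b1) \<otimes> (a2 \<otimes> b2) \<otimes> inv (a1 \<otimes> b1) \<otimes> inv (a2 \<otimes> b2)
      = ((a1 \<otimes> b1) \<otimes> (a2 \<otimes> b2)) \<otimes> inv ((a2 \<otimes> b2) \<otimes> (a1 \<otimes> b1))"
    using c by (simp add: m_assoc inv_mult_group)
  also have "\<dots> = ((a1 \<otimes> a2) \<otimes> (b1 \<otimes> b2)) \<otimes> (inv (b1 \<otimes> b2) \<otimes> inv (a2 \<otimes> a1))"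
    unfolding e1 e2 e3 using c by (simp add: inv_mult_group)
  also have "\<dots> = (a1 \<otimes> a2) \<otimes> inv (a2 \<otimes> a1)" using c by (intro cancel_mid) auto
  also have "\<dots> = a1 \<otimes> a2 \<otimes> inv a1 \<otimes> inv a2" using c by (simp add: inv_mult_group m_assoc)
  finally show ?thesis .
qed

context L22d begin

lemma iso_PA: "(\<lambda>(a, b). a \<otimes> b) \<in> iso (G\<lparr>carrier := P\<rparr> \<times>\<times> G\<lparr>carrier := A\<rparr>) G"
proof (rule isoI)
  show "(\<lambda>(a, b). a \<otimes> b) \<in> hom (G\<lparr>carrier := P\<rparr> \<times>\<times> G\<lparr>carrier := A\<rparr>) G"
  proof (rule homI)
    fix x assume "x \<in> carrier (G\<lparr>carrier := P\<rparr> \<times>\<times> G\<lparr>carrier := A\<rparr>)"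
    thus "(case x of (a, b) \<Rightarrow> a \<otimes> b) \<in> carrier G" using P_carr A_carr by auto
  next
    fix x y assume x: "x \<in> carrier (G\<lparr>carrier := P\<rparr> \<times>\<times> G\<lparr>carrier := A\<rparr>)"
      and y: "y \<in> carrier (G\<lparr>carrier := P\<rparr> \<times>\<times> G\<lparr>carrier := A\<rparr>)"
    obtain a b where ab: "x = (a, b)" "a \<in> P" "b \<in> A" using x by auto
    obtain a' b' where ab': "y = (a', b')" "a' \<in> P" "b' \<in> A" using y by auto
    have c: "a \<in> carrier G" "b \<in> carrier G" "a' \<in> carrier G" "b' \<in> carrier G"
      using ab ab' P_carr A_carr by auto
    have "b \<otimes> (a' \<otimes> b') = a' \<otimes> (b \<otimes> b')"
      using A_comm[OF ab(3) c(3)] c by (simp add: m_assoc[symmetric])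
    hence "a \<otimes> a' \<otimes> (b \<otimes> b') = a \<otimes> b \<otimes> (a' \<otimes> b')" using c by (simp add: m_assoc)
    thus "(case x \<otimes>\<^bsub>G\<lparr>carrier := P\<rparr> \<times>\<times> G\<lparr>carrier := A\<rparr>\<^esub> y of (a, b) \<Rightarrow> a \<otimes> b) =
          (case x of (a, b) \<Rightarrow> a \<otimes> b) \<otimes> (case y of (a, b) \<Rightarrow> a \<otimes> b)"
      using ab ab' by simp
  qed
  show "bij_betw (\<lambda>(a, b). a \<otimes> b) (carrier (G\<lparr>carrier := P\<rparr> \<times>\<times> G\<lparr>carrier := A\<rparr>)) (carrier G)"
  proof (rule bij_betw_imageI)
    show "inj_on (\<lambda>(a, b). a \<otimes> b) (carrier (G\<lparr>carrier := P\<rparr> \<times>\<times> G\<lparr>carrier := A\<rparr>))"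
    proof (rule inj_onI)
      fix x y assume x: "x \<in> carrier (G\<lparr>carrier := P\<rparr> \<times>\<times> G\<lparr>carrier := A\<rparr>)"
        and y: "y \<in> carrier (G\<lparr>carrier := P\<rparr> \<times>\<times> G\<lparr>carrier := A\<rparr>)"
        and eq: "(case x of (a, b) \<Rightarrow> a \<otimes> b) = (case y of (a, b) \<Rightarrow> a \<otimes> b)"
      obtain a b where ab: "x = (a, b)" "a \<in> P" "b \<in> A" using x by auto
      obtain a' b' where ab': "y = (a', b')" "a' \<in> P" "b' \<in> A" using y by auto
      have c: "a \<in> carrier G" "b \<in> carrier G" "a' \<in> carrier G" "b' \<in> carrier G"
        using ab ab' P_carr A_carr by auto
      have e: "a \<otimes> b = a' \<otimes> b'" using eq ab ab' by simp
      have "inv a' \<otimes> a = b' \<otimes> inv b"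
      proof -
        have "inv a' \<otimes> (a \<otimes> b) \<otimes> inv b = inv a' \<otimes> (a' \<otimes> b') \<otimes> inv b" using e by simp
        thus ?thesis using c by (simp add: m_assoc cancel_l)
      qed
      moreover have "inv a' \<otimes> a \<in> P" using ab ab' P_sub by (simp add: subgroup.m_closed subgroup.m_inv_closed)
      moreover have "b' \<otimes> inv b \<in> A" using ab ab' A_sub by (simp add: subgroup.m_closed subgroup.m_inv_closed)
      ultimately have "inv a' \<otimes> a = \<one>" using PA_one by simp
      moreover have "a = a' \<otimes> (inv a' \<otimes> a)" using c by (simp add: cancel_r)
      ultimately have "a = a'" using c by simp
      hence "b = b'" using e c by simp
      thus "x = y" using ab ab' \<open>a = a'\<close> by simp
    qed
    show "(\<lambda>(a, b). a \<otimes> b) ` carrier (G\<lparr>carrier := P\<rparr> \<times>\<times> G\<lparr>carrier := A\<rparr>) = carrier G"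
    proof
      show "(\<lambda>(a, b). a \<otimes> b) ` carrier (G\<lparr>carrier := P\<rparr> \<times>\<times> G\<lparr>carrier := A\<rparr>) \<subseteq> carrier G"
        using P_carr A_carr by auto
      show "carrier G \<subseteq> (\<lambda>(a, b). a \<otimes> b) ` carrier (G\<lparr>carrier := P\<rparr> \<times>\<times> G\<lparr>carrier := A\<rparr>)"
      proof
        fix g assume g: "g \<in> carrier G"
        then obtain a b where "a \<in> P" "b \<in> A" "g = a \<otimes> b" using decomp by blast
        thus "g \<in> (\<lambda>(a, b). a \<otimes> b) ` carrier (G\<lparr>carrier := P\<rparr> \<times>\<times> G\<lparr>carrier := A\<rparr>)"
          by (auto intro!: image_eqI[of _ _ "(a, b)"])
      qed
    qed
  qed
qed

lemma G_iso: "G \<cong> (G\<lparr>carrier := P\<rparr> \<times>\<times> G\<lparr>carrier := A\<rparr>)"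
proof -
  have gP: "group (G\<lparr>carrier := P\<rparr>)" using subgroup.subgroup_is_group[OF P_sub is_group] .
  have gA: "group (G\<lparr>carrier := A\<rparr>)" using subgroup.subgroup_is_group[OF A_sub is_group] .
  have "(G\<lparr>carrier := P\<rparr> \<times>\<times> G\<lparr>carrier := A\<rparr>) \<cong> G" using is_isoI[OF iso_PA] .
  thus ?thesis using group.iso_sym[OF DirProd_group[OF gP gA]] by blast
qed

lemma A_commgroup: "comm_group (G\<lparr>carrier := A\<rparr>)"
proof -
  have gA: "group (G\<lparr>carrier := A\<rparr>)" using subgroup.subgroup_is_group[OF A_sub is_group] .
  show ?thesis
    by (rule group.group_comm_groupI[OF gA]) (use A_comm A_carr in auto)
qed

end



context L22d begin

lemma finP: "finite P" using P_carr fin finite_subset by blast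

lemma P_prime_div: assumes q: "Factorial_Ring.prime q" "q dvd card P" shows "q = p"
proof (rule ccontr)
  assume qp: "q \<noteq> p"
  have gP: "group (G\<lparr>carrier := P\<rparr>)" using subgroup.subgroup_is_group[OF P_sub is_group] .
  obtain x where x: "x \<in> carrier (G\<lparr>carrier := P\<rparr>)" "x \<noteq> \<one>\<^bsub>G\<lparr>carrier := P\<rparr>\<^esub>"
      "x [^]\<^bsub>G\<lparr>carrier := P\<rparr>\<^esub> q = \<one>\<^bsub>G\<lparr>carrier := P\<rparr>\<^esub>"
    using group.cauchy_lite[OF gP _ q(1)] finP q(2) by (auto simp: order_def)
  have xP: "x \<in> P" and x1: "x \<noteq> \<one>" and xq: "x [^] q = \<one>"
    using x by (auto simp: nat_pow_consistent[symmetric])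
  obtain j where xj: "x [^] (p ^ j) = \<one>" using xP unfolding P_def by auto
  have "coprime q (p ^ j)" using primes_coprime[OF q(1) pprime qp] by simp
  hence "x = \<one>" using coprime_pow_one[OF _ xq xj] xP P_carr by auto
  thus False using x1 by simp
qed

lemma card_P: "\<exists>j. card P = p ^ j"
proof -
  obtain r where r: "card P = p ^ multiplicity p (card P) * r" "\<not> p dvd r"
  proof -
    have cP: "card P \<noteq> 0" using finP subgroup.one_closed[OF P_sub] by auto
    have nu: "\<not> is_unit p" using p_gt1 by simp
    show ?thesis using that by (rule multiplicity_decompose'[OF cP nu])
  qed
  have "r = 1"
  proof (rule ccontr)
    assume "r \<noteq> 1"
    then obtain q where q: "Factorial_Ring.prime q" "q dvd r" using prime_factor_nat by blast
    have "q dvd p ^ multiplicity p (card P) * r" by (rule dvd_mult[OF q(2)])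
    hence "q dvd card P" using r(1) by simp
    hence "q = p" using P_prime_div q(1) by blast
    thus False using q r by simp
  qed
  thus ?thesis using r by auto
qed

lemma derived_P: "derived (G\<lparr>carrier := P\<rparr>) P = D"
proof -
  have s1: "derived_set (G\<lparr>carrier := P\<rparr>) P = derived_set G P"
    using m_inv_consistent[OF P_sub] by auto
  have s2: "derived_set G P = derived_set G (carrier G)"
  proof
    show "derived_set G P \<subseteq> derived_set G (carrier G)" using P_carr by blast
    show "derived_set G (carrier G) \<subseteq> derived_set G P"
    proof (clarify)
      fix g1 g2 assume g: "g1 \<in> carrier G" "g2 \<in> carrier G"
      obtain a1 b1 where 1: "a1 \<in> P" "b1 \<in> A" "g1 = a1 \<otimes> b1" using decomp[OF g(1)] by blast
      obtain a2 b2 where 2: "a2 \<in> P" "b2 \<in> A" "g2 = a2 \<otimes> b2" using decomp[OF g(2)] by blast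
      have "g1 \<otimes> g2 \<otimes> inv g1 \<otimes> inv g2 = a1 \<otimes> a2 \<otimes> inv a1 \<otimes> inv a2"
        unfolding 1(3) 2(3)
        by (rule comm_central) (use 1 2 P_carr A_carr A_comm in auto)
      thus "g1 \<otimes> g2 \<otimes> inv g1 \<otimes> inv g2 \<in> derived_set G P" using 1 2 by blast
    qed
  qed
  have "derived (G\<lparr>carrier := P\<rparr>) P = generate (G\<lparr>carrier := P\<rparr>) (derived_set G P)"
    unfolding derived_def s1 ..
  also have "\<dots> = generate G (derived_set G P)"
    by (rule generate_consistent[OF derived_set_incl[OF order_refl P_sub] P_sub])
  also have "\<dots> = D" unfolding s2 D_def derived_def ..
  finally show ?thesis .
qed

lemma center_P: "center (G\<lparr>carrier := P\<rparr>) = center G \<inter> P"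
proof
  show "center G \<inter> P \<subseteq> center (G\<lparr>carrier := P\<rparr>)" unfolding center_def using P_carr by auto
  show "center (G\<lparr>carrier := P\<rparr>) \<subseteq> center G \<inter> P"
  proof
    fix z assume "z \<in> center (G\<lparr>carrier := P\<rparr>)"
    hence z: "z \<in> P" "\<And>x. x \<in> P \<Longrightarrow> z \<otimes> x = x \<otimes> z" unfolding center_def by auto
    have zc: "z \<in> carrier G" using z P_carr by auto
    have "z \<otimes> g = g \<otimes> z" if g: "g \<in> carrier G" for g
    proof -
      obtain a b where ab: "a \<in> P" "b \<in> A" "g = a \<otimes> b" using decomp[OF g] by blast
      have c: "a \<in> carrier G" "b \<in> carrier G" using ab P_carr A_carr by auto
      have "z \<otimes> (a \<otimes> b) = (z \<otimes> a) \<otimes> b" using c zc by (simp add: m_assoc)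
      also have "\<dots> = (a \<otimes> z) \<otimes> b" using z(2)[OF ab(1)] by simp
      also have "\<dots> = a \<otimes> (z \<otimes> b)" using c zc by (simp add: m_assoc)
      also have "\<dots> = a \<otimes> (b \<otimes> z)" using A_comm[OF ab(2) zc] by simp
      also have "\<dots> = (a \<otimes> b) \<otimes> z" using c zc by (simp add: m_assoc)
      finally show ?thesis using ab by simp
    qed
    thus "z \<in> center G \<inter> P" unfolding center_def using z zc by auto
  qed
qed

lemma main_d:
  "subgroup P G \<and> subgroup A G \<and>
       G \<cong> (G\<lparr>carrier := P\<rparr> \<times>\<times> G\<lparr>carrier := A\<rparr>) \<and>
       comm_group (G\<lparr>carrier := A\<rparr>) \<and>
       (\<exists>k. card P = p ^ k) \<and>
       card (derived (G\<lparr>carrier := P\<rparr>) P) = p ^ 2 \<and>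
       card (derived (G\<lparr>carrier := P\<rparr>) P \<inter> center (G\<lparr>carrier := P\<rparr>)) = p"
proof -
  have "D \<inter> (center G \<inter> P) = Z0" using Z0_def D_P by auto
  thus ?thesis using P_sub A_sub G_iso A_commgroup card_P derived_P center_P cardD cardZ0 by simp
qed

end

theorem lemma2p2:
  fixes G :: "('a, 'b) monoid_scheme" and p :: nat
  assumes "group G"
    and "finite (carrier G)"
    and "Factorial_Ring.prime p"
    and "gcd (p - 1) (order G) = 1"
    and "card (derived G (carrier G)) = p ^ 2"
    and "card (derived G (carrier G) \<inter> center G) = p"
  shows "nilpotent_of_class G 3 \<and>
    (\<exists>P A. subgroup P G \<and> subgroup A G \<and>
       G \<cong> (G\<lparr>carrier := P\<rparr> \<times>\<times> G\<lparr>carrier := A\<rparr>) \<and>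
       comm_group (G\<lparr>carrier := A\<rparr>) \<and>
       (\<exists>k. card P = p ^ k) \<and>
       card (derived (G\<lparr>carrier := P\<rparr>) P) = p ^ 2 \<and>
       card (derived (G\<lparr>carrier := P\<rparr>) P \<inter> center (G\<lparr>carrier := P\<rparr>)) = p)"
proof -
  have LL: "L22 G p (derived G (carrier G)) (derived G (carrier G) \<inter> center G)"
    by (rule L22.intro[OF assms(1)], unfold_locales) (use assms in auto)
  interpret L: L22 G p "derived G (carrier G)" "derived G (carrier G) \<inter> center G" by (rule LL)
  obtain k m where km: "order G = p ^ k * m" "\<not> p dvd m"
  proof -
    have cP: "order G \<noteq> 0" using L.fin L.order_gt_0_iff_finite by auto
    have nu: "\<not> is_unit p" using L.p_gt1 by simp
    show ?thesis using that by (rule multiplicity_decompose'[OF cP nu])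
  qed
  interpret D: L22d G p "derived G (carrier G)" "derived G (carrier G) \<inter> center G" k m
    by (rule L22d.intro[OF LL], unfold_locales) (use km in auto)
  show ?thesis using L.nil3 D.main_d by blast
qed



end
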